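(* Let $\Bbbk$ be algebraically closed, $S:\mathbb G_m\to GL(V)$ a linear action on a finite-dimensional $\Bbbk$-vector space $V$, and $X\subseteq\mathbb PV$ a closed $S$-invariant subscheme. Let $b\in V^*$, regarded as an element of $\Gamma(X;\mathcal O(1))$, be an $S$-weight vector of weight $k\in\mathbb Z$, and let $f\in X^S$, with $\Phi_S(f)\in\mathbb Z$ the weight of $S$ on $\mathcal O(1)|_f$. Then: (i) if $k>\Phi_S(f)$, then $b$ vanishes at $f$; (ii) if $k<\Phi_S(f)$, then $b$ vanishes on all of $\overline{X_f}$; (iii) if $k=\Phi_S(f)$, then the restriction of $b$ to $\overline{X_f}$ is unique up to scale (any two $S$-weight vectors of weight $\Phi_S(f)$ have proportional restrictions to $\overline{X_f}$); (iv) if $b$ does not vanish at $f$ (so $k=\Phi_S(f)$), then $b$ does not vanish at any point of $X_f$.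
   Context: $X_f=\{x\in X:\lim_{z\to0}S(z)\cdot x=f\}$ is the Białynicki-Birula stratum of $f$, and $\overline{X_f}$ its Zariski closure. *)

theory Defs
  imports "HOL-Computational_Algebra.Polynomial"
begin

text \<open>Concrete model: V = 'k^'n (vectors 'n => 'k with 'n finite), P(V) represented by
  its affine cone of nonzero vectors.  Only closed points are used.\<close>

definition smult_vec :: "'k::field \<Rightarrow> ('n \<Rightarrow> 'k) \<Rightarrow> ('n \<Rightarrow> 'k)" where
  "smult_vec c v = (\<lambda>i. c * v i)"

inductive poly_fun :: "(('n \<Rightarrow> 'k::field) \<Rightarrow> 'k) \<Rightarrow> bool" where
  pf_const: "poly_fun (\<lambda>v. c)"
| pf_coord: "poly_fun (\<lambda>v. v i)"
| pf_add: "poly_fun p \<Longrightarrow> poly_fun q \<Longrightarrow> poly_fun (\<lambda>v. p v + q v)"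
| pf_mult: "poly_fun p \<Longrightarrow> poly_fun q \<Longrightarrow> poly_fun (\<lambda>v. p v * q v)"

definition homog_poly_fun :: "(('n \<Rightarrow> 'k::field) \<Rightarrow> 'k) \<Rightarrow> bool" where
  "homog_poly_fun p \<longleftrightarrow> poly_fun p \<and> (\<exists>d::nat. \<forall>c v. p (smult_vec c v) = c ^ d * p v)"

definition proj_closed :: "('n \<Rightarrow> 'k::field) set \<Rightarrow> bool" where
  "proj_closed X \<longleftrightarrow> (\<exists>P. (\<forall>p\<in>P. homog_poly_fun p) \<and> X = {v. v \<noteq> (\<lambda>_. 0) \<and> (\<forall>p\<in>P. p v = 0)})"

definition proj_zclosure :: "('n \<Rightarrow> 'k::field) set \<Rightarrow> ('n \<Rightarrow> 'k) set" where
  "proj_zclosure A = \<Inter>{C. proj_closed C \<and> A \<subseteq> C}"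

definition gm_rep :: "('k::field \<Rightarrow> ('n::finite \<Rightarrow> 'k) \<Rightarrow> ('n \<Rightarrow> 'k)) \<Rightarrow> bool" where
  "gm_rep S \<longleftrightarrow>
     (\<exists>M::int set. finite M \<and> (\<exists>c :: 'n \<Rightarrow> 'n \<Rightarrow> int \<Rightarrow> 'k.
        \<forall>z. z \<noteq> 0 \<longrightarrow> (\<forall>v i. S z v i = (\<Sum>j\<in>UNIV. (\<Sum>m\<in>M. c i j m * z powi m) * v j))))
   \<and> (\<forall>v. S 1 v = v)
   \<and> (\<forall>z w. z \<noteq> 0 \<longrightarrow> w \<noteq> 0 \<longrightarrow> S (z * w) = S z \<circ> S w)"

text \<open>lim_{z->0} S(z).[x] = [f] in P(V): the orbit map extends algebraically over 0, i.e.
  for some m the vector z^m S(z) x is polynomial in z with nonzero value at 0 spanning the line f.\<close>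
definition gm_limit :: "('k::field \<Rightarrow> ('n \<Rightarrow> 'k) \<Rightarrow> ('n \<Rightarrow> 'k)) \<Rightarrow> ('n \<Rightarrow> 'k) \<Rightarrow> ('n \<Rightarrow> 'k) \<Rightarrow> bool" where
  "gm_limit S x f \<longleftrightarrow> (\<exists>m::int. \<exists>g :: 'n \<Rightarrow> 'k poly.
      (\<forall>z. z \<noteq> 0 \<longrightarrow> (\<forall>i. poly (g i) z = z powi m * S z x i))
    \<and> (\<lambda>i. poly (g i) 0) \<noteq> (\<lambda>_. 0)
    \<and> (\<exists>c. c \<noteq> 0 \<and> (\<lambda>i. poly (g i) 0) = smult_vec c f))"

definition bb_stratum :: "('k::field \<Rightarrow> ('n \<Rightarrow> 'k) \<Rightarrow> ('n \<Rightarrow> 'k)) \<Rightarrow> ('n \<Rightarrow> 'k) set \<Rightarrow> ('n \<Rightarrow> 'k) \<Rightarrow> ('n \<Rightarrow> 'k) set" where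
  "bb_stratum S X f = {x \<in> X. gm_limit S x f}"

definition fixed_pt :: "('k::field \<Rightarrow> ('n \<Rightarrow> 'k) \<Rightarrow> ('n \<Rightarrow> 'k)) \<Rightarrow> ('n \<Rightarrow> 'k) \<Rightarrow> bool" where
  "fixed_pt S f \<longleftrightarrow> f \<noteq> (\<lambda>_. 0) \<and> (\<forall>z. z \<noteq> 0 \<longrightarrow> (\<exists>c. S z f = smult_vec c f))"

text \<open>Phi_S(f): the weight of S on the line f (equivalently on O(1)|_f, with the convention
  matching that of weights of linear forms below).\<close>
definition Phi :: "('k::field \<Rightarrow> ('n \<Rightarrow> 'k) \<Rightarrow> ('n \<Rightarrow> 'k)) \<Rightarrow> ('n \<Rightarrow> 'k) \<Rightarrow> int" where
  "Phi S f = (THE w. \<forall>z. z \<noteq> 0 \<longrightarrow> S z f = smult_vec (z powi w) f)"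

definition lin_form :: "('n::finite \<Rightarrow> 'k::field) \<Rightarrow> ('n \<Rightarrow> 'k) \<Rightarrow> 'k" where
  "lin_form \<beta> v = (\<Sum>i\<in>UNIV. \<beta> i * v i)"

definition weight_vec :: "('k::field \<Rightarrow> ('n::finite \<Rightarrow> 'k) \<Rightarrow> ('n \<Rightarrow> 'k)) \<Rightarrow> ('n \<Rightarrow> 'k) \<Rightarrow> int \<Rightarrow> bool" where
  "weight_vec S \<beta> k \<longleftrightarrow> (\<forall>z v. z \<noteq> 0 \<longrightarrow> lin_form \<beta> (S z v) = z powi k * lin_form \<beta> v)"

end

theory Submission imports Defs begin

lemma alg_closed_infinite: "infinite (UNIV :: 'k::alg_closed_field set)"
proof
  assume fin: "finite (UNIV::'k set)"
  define q :: "'k poly" where "q = (\<Prod>a\<in>UNIV. [:-a,1:])"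
  have dq: "degree q = card (UNIV::'k set)"
    unfolding q_def by (subst degree_prod_eq_sum_degree) auto
  have "card (UNIV::'k set) > 0" using fin by (simp add: card_gt_0_iff)
  then have "degree (q + 1) > 0" using dq by (simp add: degree_add_eq_left)
  then obtain x where "poly (q + 1) x = 0" using alg_closed_imp_poly_has_root by blast
  moreover have "poly q x = 0" unfolding q_def poly_prod
    using fin by (intro prod_zero) auto
  ultimately show False by simp
qed

lemma poly_eq_nz:
  fixes p q :: "'k::alg_closed_field poly"
  assumes "\<And>z. z \<noteq> 0 \<Longrightarrow> poly p z = poly q z"
  shows "p = q"
proof (rule ccontr)
  assume "p \<noteq> q"
  then have "p - q \<noteq> 0" by simp
  then have "finite {x. poly (p - q) x = 0}" by (rule poly_roots_finite)
  moreover have "UNIV - {0} \<subseteq> {x. poly (p - q) x = 0}" using assms by auto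
  ultimately have "finite (UNIV - {0::'k})" by (rule rev_finite_subset)
  then have "finite (UNIV::'k set)" by simp
  with alg_closed_infinite show False by blast
qed

lemma laurent_zero:
  fixes b :: "int \<Rightarrow> 'k::alg_closed_field"
  assumes fin: "finite M" and z: "\<And>z. z \<noteq> 0 \<Longrightarrow> (\<Sum>m\<in>M. b m * z powi m) = 0"
    and m0: "m0 \<in> M"
  shows "b m0 = 0"
proof -
  define N :: int where "N = (\<Sum>m\<in>M. \<bar>m\<bar>)"
  have N: "m + N \<ge> 0" if "m \<in> M" for m
  proof -
    have "\<bar>m\<bar> \<le> N" unfolding N_def using fin that
      by (intro member_le_sum) auto
    then show ?thesis by linarith
  qed
  define P where "P = (\<Sum>m\<in>M. monom (b m) (nat (m + N)))"
  have "poly P z = poly 0 z" if "z \<noteq> 0" for z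
  proof -
    have "poly P z = (\<Sum>m\<in>M. b m * z ^ nat (m + N))"
      unfolding P_def by (simp add: poly_sum poly_monom)
    also have "\<dots> = (\<Sum>m\<in>M. b m * (z powi m * z powi N))"
    proof (rule sum.cong[OF refl])
      fix m assume "m \<in> M"
      then have "z ^ nat (m + N) = z powi (m + N)" using N
        by (metis nat_0_le power_int_of_nat)
      then show "b m * z ^ nat (m + N) = b m * (z powi m * z powi N)"
        using that by (simp add: power_int_add)
    qed
    also have "\<dots> = (\<Sum>m\<in>M. b m * z powi m) * z powi N"
      by (simp add: sum_distrib_right mult.assoc)
    also have "\<dots> = 0" using z[OF that] by simp
    finally show ?thesis by simp
  qed
  then have "P = 0" by (rule poly_eq_nz)
  then have "coeff P (nat (m0 + N)) = 0" by simp
  moreover have "coeff P (nat (m0 + N)) = (\<Sum>m\<in>M. if m = m0 then b m else 0)"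
    unfolding P_def coeff_sum coeff_monom
  proof (rule sum.cong[OF refl])
    fix m assume "m \<in> M"
    then show "(if nat (m + N) = nat (m0 + N) then b m else 0) = (if m = m0 then b m else 0)"
      using N[of m] N[OF m0] by auto
  qed
  moreover have "(\<Sum>m\<in>M. if m = m0 then b m else 0) = b m0"
    using fin m0 by (simp add: sum.delta)
  ultimately show ?thesis by simp
qed

lemma powi_inj:
  fixes a b :: int
  assumes "\<And>z::'k::alg_closed_field. z \<noteq> 0 \<Longrightarrow> z powi a = z powi b"
  shows "a = b"
proof (rule ccontr)
  assume ne: "a \<noteq> b"
  define c :: "int \<Rightarrow> 'k" where "c = (\<lambda>m. if m = a then 1 else -1)"
  have "c a = 0"
  proof (rule laurent_zero[of "{a,b}"])
    fix z :: 'k assume "z \<noteq> 0"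
    then show "(\<Sum>m\<in>{a,b}. c m * z powi m) = 0" using ne assms[of z] by (simp add: c_def)
  qed auto
  then show False by (simp add: c_def)
qed


lemma smult_vec_app: "smult_vec a v i = a * v i"
  by (simp add: smult_vec_def)

lemma phi_prop:
  fixes S :: "'k::alg_closed_field \<Rightarrow> ('n::finite \<Rightarrow> 'k) \<Rightarrow> ('n \<Rightarrow> 'k)"
  assumes rep: "gm_rep S" and ffix: "fixed_pt S f"
  shows "\<forall>z. z \<noteq> 0 \<longrightarrow> S z f = smult_vec (z powi Phi S f) f"
proof -
  have R: "\<exists>M::int set. finite M \<and> (\<exists>c :: 'n \<Rightarrow> 'n \<Rightarrow> int \<Rightarrow> 'k.
        \<forall>z. z \<noteq> 0 \<longrightarrow> (\<forall>v i. S z v i = (\<Sum>j\<in>UNIV. (\<Sum>m\<in>M. c i j m * z powi m) * v j)))"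
    and S1: "\<And>v. S 1 v = v"
    and Smul0: "\<forall>z w. z \<noteq> 0 \<longrightarrow> w \<noteq> 0 \<longrightarrow> S (z * w) = S z \<circ> S w"
    using rep unfolding gm_rep_def by simp_all
  obtain M :: "int set" and c :: "'n \<Rightarrow> 'n \<Rightarrow> int \<Rightarrow> 'k" where finM: "finite M"
    and Sdef0: "\<forall>z. z \<noteq> 0 \<longrightarrow> (\<forall>v i. S z v i = (\<Sum>j\<in>UNIV. (\<Sum>m\<in>M. c i j m * z powi m) * v j))"
    using R by blast
  have Sdef: "\<And>z v i. z \<noteq> 0 \<Longrightarrow> S z v i = (\<Sum>j\<in>UNIV. (\<Sum>m\<in>M. c i j m * z powi m) * v j)"
    using Sdef0 by simp
  have Smul: "S (z * w) = S z \<circ> S w" if "z \<noteq> 0" "w \<noteq> 0" for z w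
    using Smul0 that by simp
  have lin: "S z (smult_vec a v) = smult_vec a (S z v)" if "z \<noteq> 0" for z a v
    by (rule ext) (simp add: Sdef[OF that] smult_vec_app sum_distrib_left mult_ac)
  have fnz: "f \<noteq> (\<lambda>_. 0)" and fx: "\<forall>z. z \<noteq> 0 \<longrightarrow> (\<exists>c. S z f = smult_vec c f)"
    using ffix unfolding fixed_pt_def by simp_all
  from fnz obtain i0 where fi0: "f i0 \<noteq> 0" by (auto simp: fun_eq_iff)
  define ch where "ch z = S z f i0 / f i0" for z
  have fixc: "S z f = smult_vec (ch z) f" if z: "z \<noteq> 0" for z
  proof -
    obtain a where a: "S z f = smult_vec a f" using fx z by blast
    then have "ch z = a" using fi0 by (simp add: ch_def smult_vec_app)
    then show ?thesis using a by simp
  qed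
  define b where "b m = (\<Sum>j\<in>UNIV. c i0 j m * f j) / f i0" for m
  have chL: "ch z = (\<Sum>m\<in>M. b m * z powi m)" if "z \<noteq> 0" for z
  proof -
    have "(\<Sum>j\<in>UNIV. (\<Sum>m\<in>M. c i0 j m * z powi m) * f j)
        = (\<Sum>m\<in>M. (\<Sum>j\<in>UNIV. c i0 j m * f j) * z powi m)"
      unfolding sum_distrib_right
      by (subst sum.swap) (simp add: mult_ac)
    moreover have "(\<Sum>m\<in>M. b m * z powi m) = (\<Sum>m\<in>M. (\<Sum>j\<in>UNIV. c i0 j m * f j) * z powi m) / f i0"
      unfolding sum_divide_distrib by (rule sum.cong) (simp_all add: b_def)
    ultimately show ?thesis
      by (simp add: ch_def Sdef[OF that])
  qed
  have chmul: "ch (z * w) = ch z * ch w" if "z \<noteq> 0" "w \<noteq> 0" for z w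
  proof -
    have "S (z * w) f = smult_vec (ch w) (smult_vec (ch z) f)"
      using Smul[OF that] fixc[OF that(2)] lin[OF that(1)] fixc[OF that(1)] by simp
    then have "S (z * w) f i0 = ch w * ch z * f i0" by (simp add: smult_vec_app)
    moreover have "S (z * w) f i0 = ch (z * w) * f i0"
      using fixc[of "z*w"] that by (simp add: smult_vec_app)
    ultimately show ?thesis using fi0 by simp
  qed
  have coef: "b m * w powi m = ch w * b m" if "w \<noteq> 0" "m \<in> M" for w m
  proof -
    have "b m * w powi m - ch w * b m = 0"
    proof (rule laurent_zero[OF finM _ that(2), where b = "\<lambda>m. b m * w powi m - ch w * b m"])
      fix z :: 'k assume z: "z \<noteq> 0"
      have "(\<Sum>m\<in>M. (b m * w powi m - ch w * b m) * z powi m)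
          = (\<Sum>m\<in>M. b m * (z * w) powi m) - ch w * (\<Sum>m\<in>M. b m * z powi m)"
        unfolding sum_distrib_left sum_subtractf[symmetric]
        by (rule sum.cong) (simp_all add: power_int_mult_distrib algebra_simps)
      also have "\<dots> = ch (z * w) - ch w * ch z" using z that by (simp add: chL)
      also have "\<dots> = 0" using chmul[OF z that(1)] by simp
      finally show "(\<Sum>m\<in>M. (b m * w powi m - ch w * b m) * z powi m) = 0" .
    qed
    then show ?thesis by simp
  qed
  have "ch 1 = 1" using fi0 by (simp add: ch_def S1)
  then have "(\<Sum>m\<in>M. b m) = 1" using chL[of 1] by simp
  then obtain m0 where m0: "m0 \<in> M" "b m0 \<noteq> 0"
    by (metis one_neq_zero sum.neutral)
  have chm: "ch w = w powi m0" if "w \<noteq> 0" for w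
    using coef[OF that m0(1)] m0(2) by (simp add: mult.commute)
  have P0: "\<forall>z. z \<noteq> 0 \<longrightarrow> S z f = smult_vec (z powi m0) f"
    using fixc chm by simp
  have "Phi S f = m0"
    unfolding Phi_def
  proof (rule the_equality)
    show "\<forall>z. z \<noteq> 0 \<longrightarrow> S z f = smult_vec (z powi m0) f" by (rule P0)
  next
    fix w assume w: "\<forall>z. z \<noteq> 0 \<longrightarrow> S z f = smult_vec (z powi w) f"
    show "w = m0"
    proof (rule powi_inj)
      fix z :: 'k assume z: "z \<noteq> 0"
      have "z powi w * f i0 = z powi m0 * f i0"
        using w P0 z by (metis smult_vec_app)
      then show "z powi w = z powi m0" using fi0 by simp
    qed
  qed
  then show ?thesis using P0 by simp
qed


lemma rep_data:
  fixes S :: "'k::field \<Rightarrow> ('n::finite \<Rightarrow> 'k) \<Rightarrow> ('n \<Rightarrow> 'k)"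
  assumes rep: "gm_rep S"
  obtains M :: "int set" and c :: "'n \<Rightarrow> 'n \<Rightarrow> int \<Rightarrow> 'k" where "finite M"
    "\<And>z v i. z \<noteq> 0 \<Longrightarrow> S z v i = (\<Sum>j\<in>UNIV. (\<Sum>m\<in>M. c i j m * z powi m) * v j)"
proof -
  have R: "\<exists>M::int set. finite M \<and> (\<exists>c :: 'n \<Rightarrow> 'n \<Rightarrow> int \<Rightarrow> 'k.
        \<forall>z. z \<noteq> 0 \<longrightarrow> (\<forall>v i. S z v i = (\<Sum>j\<in>UNIV. (\<Sum>m\<in>M. c i j m * z powi m) * v j)))"
    using rep unfolding gm_rep_def by simp
  then obtain M :: "int set" and c :: "'n \<Rightarrow> 'n \<Rightarrow> int \<Rightarrow> 'k" where finM: "finite M"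
    and Sdef0: "\<forall>z. z \<noteq> 0 \<longrightarrow> (\<forall>v i. S z v i = (\<Sum>j\<in>UNIV. (\<Sum>m\<in>M. c i j m * z powi m) * v j))"
    by blast
  show ?thesis using that[OF finM] Sdef0 by simp
qed

lemma rep_mul:
  assumes "gm_rep S" "z \<noteq> 0" "w \<noteq> 0"
  shows "S (z * w) v = S z (S w v)"
proof -
  have "\<forall>z w. z \<noteq> 0 \<longrightarrow> w \<noteq> 0 \<longrightarrow> S (z * w) = S z \<circ> S w"
    using assms(1) unfolding gm_rep_def by simp
  then show ?thesis using assms(2,3) by simp
qed

lemma lin_form_smult: "lin_form \<gamma> (smult_vec c v) = c * lin_form \<gamma> v"
  by (simp add: lin_form_def smult_vec_app sum_distrib_left mult_ac)

lemma strat: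
  fixes S :: "'k::alg_closed_field \<Rightarrow> ('n::finite \<Rightarrow> 'k) \<Rightarrow> ('n \<Rightarrow> 'k)"
  assumes rep: "gm_rep S" and ffix: "fixed_pt S f" and lim: "gm_limit S x f"
  shows "\<exists>c0. c0 \<noteq> 0 \<and> (\<forall>\<gamma> k'. weight_vec S \<gamma> k' \<longrightarrow> k' < Phi S f \<longrightarrow> lin_form \<gamma> x = 0)
     \<and> (\<forall>\<gamma>. weight_vec S \<gamma> (Phi S f) \<longrightarrow> lin_form \<gamma> x = c0 * lin_form \<gamma> f)"
proof -
  obtain M :: "int set" and c :: "'n \<Rightarrow> 'n \<Rightarrow> int \<Rightarrow> 'k" where finM: "finite M"
    and Sdef: "\<And>z v i. z \<noteq> 0 \<Longrightarrow> S z v i = (\<Sum>j\<in>UNIV. (\<Sum>m\<in>M. c i j m * z powi m) * v j)"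
    using rep_data[OF rep] by blast
  have L: "\<exists>m::int. \<exists>g :: 'n \<Rightarrow> 'k poly.
      (\<forall>z. z \<noteq> 0 \<longrightarrow> (\<forall>i. poly (g i) z = z powi m * S z x i))
    \<and> (\<exists>c. c \<noteq> 0 \<and> (\<lambda>i. poly (g i) 0) = smult_vec c f)"
    using lim unfolding gm_limit_def by blast
  then obtain m :: int and g :: "'n \<Rightarrow> 'k poly" and c0 :: 'k where
    gz0: "\<forall>z. z \<noteq> 0 \<longrightarrow> (\<forall>i. poly (g i) z = z powi m * S z x i)"
    and c0: "c0 \<noteq> 0" and g00: "(\<lambda>i. poly (g i) 0) = smult_vec c0 f"
    by blast
  have gz: "poly (g i) z = z powi m * S z x i" if "z \<noteq> 0" for z i
    using gz0 that by simp
  have g0: "poly (g i) 0 = c0 * f i" for i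
    using fun_cong[OF g00, of i] by (simp add: smult_vec_app)
  have phi: "S z f = smult_vec (z powi Phi S f) f" if "z \<noteq> 0" for z
    using phi_prop[OF rep ffix] that by simp
  have fnz: "f \<noteq> (\<lambda>_. 0)" using ffix unfolding fixed_pt_def by simp
  from fnz obtain i0 where fi0: "f i0 \<noteq> 0" by (auto simp: fun_eq_iff)
  have key: "w powi Phi S f = w powi (-m)" if w: "w \<noteq> 0" for w :: 'k
  proof -
    define A where "A j = (\<Sum>m'\<in>M. c i0 j m' * w powi m')" for j
    define Q where "Q = (\<Sum>j\<in>UNIV. smult (A j) (g j))"
    define R where "R = smult (w powi (-m)) (pcompose (g i0) [:0,w:])"
    have "poly Q z = poly R z" if z: "z \<noteq> 0" for z
    proof -
      have "poly Q z = (\<Sum>j\<in>UNIV. A j * (z powi m * S z x j))"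
        by (simp add: Q_def poly_sum gz[OF z])
      also have "\<dots> = z powi m * S w (S z x) i0"
        by (simp add: Sdef[OF w] A_def sum_distrib_left mult_ac)
      also have "\<dots> = z powi m * S (w * z) x i0"
        using rep_mul[OF rep w z] by simp
      finally have 1: "poly Q z = z powi m * S (w * z) x i0" .
      have wz: "w * z \<noteq> 0" using w z by simp
      have "poly R z = w powi (-m) * ((w * z) powi m * S (w * z) x i0)"
        using gz[OF wz, of i0] by (simp add: R_def poly_pcompose mult.commute)
      also have "\<dots> = z powi m * S (w * z) x i0"
        using w by (simp add: power_int_mult_distrib power_int_minus field_simps)
      finally show ?thesis using 1 by simp
    qed
    then have "Q = R" by (rule poly_eq_nz)
    then have "poly Q 0 = poly R 0" by simp
    then have e1: "(\<Sum>j\<in>UNIV. A j * (c0 * f j)) = w powi (-m) * (c0 * f i0)"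
      by (simp add: Q_def R_def poly_sum poly_pcompose g0)
    have e2: "(\<Sum>j\<in>UNIV. A j * (c0 * f j)) = c0 * S w f i0"
      by (simp add: Sdef[OF w] A_def sum_distrib_left mult_ac)
    have e3: "S w f i0 = w powi Phi S f * f i0"
      using phi[OF w] by (simp add: smult_vec_app)
    have "c0 * f i0 * w powi Phi S f = c0 * S w f i0" using e3 by (simp add: mult_ac)
    also have "\<dots> = w powi (-m) * (c0 * f i0)" using e1 e2 by simp
    also have "\<dots> = c0 * f i0 * w powi (-m)" by (simp add: mult_ac)
    finally have "c0 * f i0 * w powi Phi S f = c0 * f i0 * w powi (-m)" .
    moreover have "c0 * f i0 \<noteq> 0" using c0 fi0 by simp
    ultimately show ?thesis by (metis mult_cancel_left)
  qed
  have mphi: "Phi S f = -m" by (rule powi_inj) (rule key)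
  have P: "poly (\<Sum>i\<in>UNIV. smult (\<gamma> i) (g i)) z = z powi (m + k') * lin_form \<gamma> x"
    if wt: "weight_vec S \<gamma> k'" and z: "z \<noteq> 0" for \<gamma> k' z
  proof -
    have "poly (\<Sum>i\<in>UNIV. smult (\<gamma> i) (g i)) z = (\<Sum>i\<in>UNIV. \<gamma> i * (z powi m * S z x i))"
      by (simp add: poly_sum gz[OF z])
    also have "\<dots> = z powi m * lin_form \<gamma> (S z x)"
      by (simp add: lin_form_def sum_distrib_left mult_ac)
    also have "\<dots> = z powi m * (z powi k' * lin_form \<gamma> x)"
      using wt z unfolding weight_vec_def by simp
    finally show ?thesis using z by (simp add: power_int_add)
  qed
  have P0: "poly (\<Sum>i\<in>UNIV. smult (\<gamma> i) (g i)) 0 = c0 * lin_form \<gamma> f" for \<gamma>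
    by (simp add: poly_sum g0 lin_form_def sum_distrib_left mult_ac)
  have part1: "lin_form \<gamma> x = 0" if wt: "weight_vec S \<gamma> k'" and lt: "k' < Phi S f" for \<gamma> k'
  proof -
    define d where "d = nat (-(m + k'))"
    have dpos: "d > 0" using lt mphi by (simp add: d_def)
    have dd: "int d = -(m + k')" using lt mphi by (simp add: d_def)
    define Pg where "Pg = (\<Sum>i\<in>UNIV. smult (\<gamma> i) (g i))"
    have "poly (Pg * monom 1 d) z = poly [:lin_form \<gamma> x:] z" if z: "z \<noteq> 0" for z
    proof -
      have "z ^ d = z powi (-(m + k'))" using dd by (metis power_int_of_nat)
      then have 1: "poly (Pg * monom 1 d) z = z powi (m + k') * z powi (-(m + k')) * lin_form \<gamma> x"
        using P[OF wt z] by (simp add: Pg_def poly_monom mult_ac)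
      have "z powi (m + k') * z powi (-(m + k')) = 1"
        using z by (subst power_int_add[symmetric]) auto
      then show ?thesis using 1 by simp
    qed
    then have "Pg * monom 1 d = [:lin_form \<gamma> x:]" by (rule poly_eq_nz)
    then have "poly (Pg * monom 1 d) 0 = lin_form \<gamma> x" by simp
    then show ?thesis using dpos by (simp add: poly_monom zero_power)
  qed
  have part2: "lin_form \<gamma> x = c0 * lin_form \<gamma> f" if wt: "weight_vec S \<gamma> (Phi S f)" for \<gamma>
  proof -
    define Pg where "Pg = (\<Sum>i\<in>UNIV. smult (\<gamma> i) (g i))"
    have "poly Pg z = poly [:lin_form \<gamma> x:] z" if z: "z \<noteq> 0" for z
      using P[OF wt z] mphi by (simp add: Pg_def)
    then have "Pg = [:lin_form \<gamma> x:]" by (rule poly_eq_nz)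
    then have "poly Pg 0 = lin_form \<gamma> x" by simp
    then show ?thesis using P0[of \<gamma>] by (simp add: Pg_def)
  qed
  show ?thesis using c0 part1 part2 by blast
qed


lemma poly_fun_sum: "finite A \<Longrightarrow> poly_fun (\<lambda>v. \<Sum>i\<in>A. (\<gamma> i :: 'k::field) * v i)"
proof (induction A rule: finite_induct)
  case empty
  then show ?case using pf_const[of 0] by simp
next
  case (insert a A)
  have "poly_fun (\<lambda>v. \<gamma> a * v a)" by (intro pf_mult pf_const pf_coord)
  then have "poly_fun (\<lambda>v. \<gamma> a * v a + (\<Sum>i\<in>A. \<gamma> i * v i))"
    using insert by (intro pf_add)
  then show ?case using insert by simp
qed

lemma lin_closed: "proj_closed {v :: 'n::finite \<Rightarrow> 'k::field. v \<noteq> (\<lambda>_. 0) \<and> lin_form \<gamma> v = 0}"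
  unfolding proj_closed_def
proof (intro exI[of _ "{lin_form \<gamma>}"] conjI)
  have "poly_fun (lin_form \<gamma>)" unfolding lin_form_def by (rule poly_fun_sum) simp
  moreover have "\<forall>c v. lin_form \<gamma> (smult_vec c v) = c ^ 1 * lin_form \<gamma> v"
    by (simp add: lin_form_smult)
  ultimately show "\<forall>p\<in>{lin_form \<gamma>}. homog_poly_fun p"
    unfolding homog_poly_fun_def by blast
qed auto

lemma vanish_closure:
  assumes "\<forall>x\<in>A. lin_form \<gamma> x = 0" "\<forall>x\<in>A. x \<noteq> (\<lambda>_. 0)"
    and "x \<in> proj_zclosure A"
  shows "lin_form \<gamma> x = (0 :: 'k::field)"
proof -
  have "A \<subseteq> {v. v \<noteq> (\<lambda>_. 0) \<and> lin_form \<gamma> v = 0}" using assms(1,2) by blast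
  then show ?thesis using assms(3) lin_closed[of \<gamma>] unfolding proj_zclosure_def by blast
qed

lemma lin_comb: "lin_form (\<lambda>i. a * \<beta> i - b * \<beta>' i) v = a * lin_form \<beta> v - b * lin_form \<beta>' v"
  by (simp add: lin_form_def sum_subtractf sum_distrib_left algebra_simps)

lemma wt_f:
  fixes S :: "'k::alg_closed_field \<Rightarrow> ('n::finite \<Rightarrow> 'k) \<Rightarrow> ('n \<Rightarrow> 'k)"
  assumes rep: "gm_rep S" and ffix: "fixed_pt S f" and wt: "weight_vec S \<gamma> k'"
    and nz: "lin_form \<gamma> f \<noteq> 0"
  shows "k' = Phi S f"
proof (rule powi_inj)
  fix z :: 'k assume z: "z \<noteq> 0"
  have "z powi k' * lin_form \<gamma> f = lin_form \<gamma> (S z f)" using wt z unfolding weight_vec_def by simp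
  also have "\<dots> = z powi Phi S f * lin_form \<gamma> f"
    using phi_prop[OF rep ffix] z by (simp add: lin_form_smult)
  finally show "z powi k' = z powi Phi S f" using nz by simp
qed

theorem lemma2p1:
  fixes S :: "'k::alg_closed_field \<Rightarrow> ('n::finite \<Rightarrow> 'k) \<Rightarrow> ('n \<Rightarrow> 'k)"
    and X :: "('n \<Rightarrow> 'k) set"
    and \<beta> :: "'n \<Rightarrow> 'k" and k :: int and f :: "'n \<Rightarrow> 'k"
  assumes rep: "gm_rep S"
    and closed: "proj_closed X"
    and inv: "\<And>z x. z \<noteq> 0 \<Longrightarrow> x \<in> X \<Longrightarrow> S z x \<in> X"
    and wt: "weight_vec S \<beta> k"
    and fX: "f \<in> X" and ffix: "fixed_pt S f"
  shows "(k > Phi S f \<longrightarrow> lin_form \<beta> f = 0)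
       \<and> (k < Phi S f \<longrightarrow> (\<forall>x \<in> proj_zclosure (bb_stratum S X f). lin_form \<beta> x = 0))
       \<and> (k = Phi S f \<longrightarrow> (\<forall>\<beta>'. weight_vec S \<beta>' (Phi S f) \<longrightarrow>
             (\<exists>c1 c2. (c1, c2) \<noteq> (0, 0) \<and>
                (\<forall>x \<in> proj_zclosure (bb_stratum S X f). c1 * lin_form \<beta> x = c2 * lin_form \<beta>' x))))
       \<and> (lin_form \<beta> f \<noteq> 0 \<longrightarrow> (\<forall>x \<in> bb_stratum S X f. lin_form \<beta> x \<noteq> 0))"
proof -
  have Xnz: "\<forall>x\<in>X. x \<noteq> (\<lambda>_. 0)" using closed unfolding proj_closed_def by blast
  have Bnz: "\<forall>x\<in>bb_stratum S X f. x \<noteq> (\<lambda>_. 0)" using Xnz unfolding bb_stratum_def by blast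
  have lim: "gm_limit S x f" if "x \<in> bb_stratum S X f" for x
    using that unfolding bb_stratum_def by blast
  have i: "k > Phi S f \<longrightarrow> lin_form \<beta> f = 0"
    using wt_f[OF rep ffix wt] by auto
  have ii: "k < Phi S f \<longrightarrow> (\<forall>x \<in> proj_zclosure (bb_stratum S X f). lin_form \<beta> x = 0)"
  proof (intro impI ballI)
    fix x assume lt: "k < Phi S f" and x: "x \<in> proj_zclosure (bb_stratum S X f)"
    have "\<forall>y\<in>bb_stratum S X f. lin_form \<beta> y = 0"
      using strat[OF rep ffix lim] wt lt by blast
    then show "lin_form \<beta> x = 0" using vanish_closure Bnz x by blast
  qed
  have iii: "k = Phi S f \<longrightarrow> (\<forall>\<beta>'. weight_vec S \<beta>' (Phi S f) \<longrightarrow>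
             (\<exists>c1 c2. (c1, c2) \<noteq> (0, 0) \<and>
                (\<forall>x \<in> proj_zclosure (bb_stratum S X f). c1 * lin_form \<beta> x = c2 * lin_form \<beta>' x)))"
  proof (intro impI allI)
    fix \<beta>' assume eq: "k = Phi S f" and wt': "weight_vec S \<beta>' (Phi S f)"
    define c1 where "c1 = (if lin_form \<beta>' f = 0 \<and> lin_form \<beta> f = 0 then 1 else lin_form \<beta>' f)"
    define c2 where "c2 = (if lin_form \<beta>' f = 0 \<and> lin_form \<beta> f = 0 then 0 else lin_form \<beta> f)"
    define \<gamma> where "\<gamma> = (\<lambda>i. c1 * \<beta> i - c2 * \<beta>' i)"
    have nz: "(c1, c2) \<noteq> (0, 0)" by (auto simp: c1_def c2_def)
    have wg: "weight_vec S \<gamma> (Phi S f)"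
      using wt wt' eq unfolding weight_vec_def \<gamma>_def lin_comb by (simp add: algebra_simps)
    have gf: "lin_form \<gamma> f = 0" unfolding \<gamma>_def lin_comb by (simp add: c1_def c2_def)
    have "\<forall>y\<in>bb_stratum S X f. lin_form \<gamma> y = 0"
    proof
      fix y assume y: "y \<in> bb_stratum S X f"
      obtain c0 where "\<forall>\<gamma>. weight_vec S \<gamma> (Phi S f) \<longrightarrow> lin_form \<gamma> y = c0 * lin_form \<gamma> f"
        using strat[OF rep ffix lim[OF y]] by blast
      then show "lin_form \<gamma> y = 0" using wg gf by simp
    qed
    then have "\<forall>x \<in> proj_zclosure (bb_stratum S X f). lin_form \<gamma> x = 0"
      using vanish_closure Bnz by blast
    then have "\<forall>x \<in> proj_zclosure (bb_stratum S X f). c1 * lin_form \<beta> x = c2 * lin_form \<beta>' x"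
      unfolding \<gamma>_def lin_comb by simp
    then show "\<exists>c1 c2. (c1, c2) \<noteq> (0, 0) \<and>
                (\<forall>x \<in> proj_zclosure (bb_stratum S X f). c1 * lin_form \<beta> x = c2 * lin_form \<beta>' x)"
      using nz by blast
  qed
  have iv: "lin_form \<beta> f \<noteq> 0 \<longrightarrow> (\<forall>x \<in> bb_stratum S X f. lin_form \<beta> x \<noteq> 0)"
  proof (intro impI ballI)
    fix x assume nz: "lin_form \<beta> f \<noteq> 0" and x: "x \<in> bb_stratum S X f"
    have eq: "k = Phi S f" using wt_f[OF rep ffix wt nz] .
    obtain c0 where "c0 \<noteq> 0" "\<forall>\<gamma>. weight_vec S \<gamma> (Phi S f) \<longrightarrow> lin_form \<gamma> x = c0 * lin_form \<gamma> f"
      using strat[OF rep ffix lim[OF x]] by blast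
    then show "lin_form \<beta> x \<noteq> 0" using wt eq nz by simp
  qed
  show ?thesis using i ii iii iv by blast
qed

end
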